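(* Let $r\ge2$ and let $t\ge3$ be an odd integer. Let $(X,\mathcal A)$ be a $(k_{t-1},b_r)$ resolvable configuration and let $E$ be a subset of $X$ with $|E|=t$. Then there exists a line $A\in\mathcal A$ with $|E\cap A|=1$.
   Context: A $(k_{t-1},b_r)$ configuration is a pair $(X,\mathcal A)$ where $X$ is a set of $k$ points and $\mathcal A$ is a collection of $b$ subsets of $X$ (lines) such that each line contains exactly $r$ points, each point belongs to exactly $t-1$ lines, and every pair of distinct points belongs to at most one line. It is resolvable if the lines can be partitioned into $t-1$ parallel classes, a parallel class being a set of lines that partitions $X$. *)

theory Defs
  imports Main
begin

definition configuration :: "'a set \<Rightarrow> 'a set set \<Rightarrow> nat \<Rightarrow> nat \<Rightarrow> nat \<Rightarrow> nat \<Rightarrow> bool" where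
  "configuration X \<A> k b r t \<longleftrightarrow>
     finite X \<and> card X = k \<and> finite \<A> \<and> card \<A> = b \<and>
     (\<forall>L\<in>\<A>. L \<subseteq> X \<and> card L = r) \<and>
     (\<forall>x\<in>X. card {L\<in>\<A>. x \<in> L} = t - 1) \<and>
     (\<forall>x\<in>X. \<forall>y\<in>X. x \<noteq> y \<longrightarrow> card {L\<in>\<A>. x \<in> L \<and> y \<in> L} \<le> 1)"

definition parallel_class :: "'a set \<Rightarrow> 'a set set \<Rightarrow> bool" where
  "parallel_class X C \<longleftrightarrow>
     \<Union>C = X \<and> {} \<notin> C \<and> (\<forall>L\<in>C. \<forall>M\<in>C. L \<noteq> M \<longrightarrow> L \<inter> M = {})"

definition resolvable :: "'a set \<Rightarrow> 'a set set \<Rightarrow> nat \<Rightarrow> bool" where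
  "resolvable X \<A> t \<longleftrightarrow>
     (\<exists>P :: nat \<Rightarrow> 'a set set.
        (\<Union>i<t-1. P i) = \<A> \<and>
        (\<forall>i<t-1. \<forall>j<t-1. i \<noteq> j \<longrightarrow> P i \<inter> P j = {}) \<and>
        (\<forall>i<t-1. parallel_class X (P i)))"

end

theory Submission
  imports Defs
begin

theorem lemma11:
  fixes X :: "'a set" and \<A> :: "'a set set" and E :: "'a set" and k b r t :: nat
  assumes "r \<ge> 2" and "t \<ge> 3" and "odd t"
    and "configuration X \<A> k b r t" and "resolvable X \<A> t"
    and "E \<subseteq> X" and "card E = t"
  shows "\<exists>A\<in>\<A>. card (E \<inter> A) = 1"
proof (rule ccontr)
  assume neg: "\<not> ?thesis"
  hence no1: "\<forall>A\<in>\<A>. card (E \<inter> A) \<noteq> 1" by auto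
  from assms(4) have fX: "finite X" and lines: "\<forall>L\<in>\<A>. L \<subseteq> X \<and> card L = r"
    and pair: "\<forall>x\<in>X. \<forall>y\<in>X. x \<noteq> y \<longrightarrow> card {L\<in>\<A>. x \<in> L \<and> y \<in> L} \<le> 1"
    and fA: "finite \<A>"
    unfolding configuration_def by auto
  from assms(5) obtain P where PU: "(\<Union>i<t-1. P i) = \<A>"
    and Pd: "\<forall>i<t-1. \<forall>j<t-1. i \<noteq> j \<longrightarrow> P i \<inter> P j = {}"
    and Pc: "\<forall>i<t-1. parallel_class X (P i)"
    unfolding resolvable_def by blast
  have fE: "finite E" using fX assms(6) finite_subset by blast
  have pc1: "\<Union>(P i) = X" if "i<t-1" for i
    using Pc that unfolding parallel_class_def by simp
  have pc2: "\<forall>L\<in>P i. \<forall>M\<in>P i. L \<noteq> M \<longrightarrow> L \<inter> M = {}" if "i<t-1" for i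
    using Pc that unfolding parallel_class_def by simp
  have ex: "\<exists>L. L \<in> P i \<and> x \<in> L" if "i<t-1" "x\<in>X" for i x
  proof -
    have "x \<in> \<Union>(P i)" using pc1[OF that(1)] that(2) by simp
    thus ?thesis by blast
  qed
  have uniq: "L = M" if "i<t-1" "L\<in>P i" "M\<in>P i" "x\<in>L" "x\<in>M" for i x L M
  proof (rule ccontr)
    assume "L \<noteq> M"
    hence "L \<inter> M = {}" using pc2[OF that(1)] that(2,3) by blast
    thus False using that(4,5) by blast
  qed
  define ln where "ln i x = (SOME L. L \<in> P i \<and> x \<in> L)" for i x
  have ln: "ln i x \<in> P i \<and> x \<in> ln i x" if "i<t-1" "x\<in>X" for i x
    unfolding ln_def using someI_ex[OF ex[OF that]] .
  have inA: "L \<in> \<A>" if "i<t-1" "L\<in>P i" for i L using PU that by blast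
  have two: "2 \<le> card (E \<inter> L)" if "L \<in> \<A>" "E \<inter> L \<noteq> {}" for L
  proof -
    have "card (E \<inter> L) \<noteq> 0" using that fE by simp
    moreover have "card (E \<inter> L) \<noteq> 1" using no1 that by blast
    ultimately show ?thesis by linarith
  qed
  have dl: "L = M" if "L\<in>\<A>" "M\<in>\<A>" "x\<in>L" "x\<in>M" "y\<in>L" "y\<in>M" "x\<in>X" "y\<in>X" "x\<noteq>y"
    for L M x y
  proof -
    have "card {L\<in>\<A>. x \<in> L \<and> y \<in> L} \<le> Suc 0" using pair that by auto
    moreover have "finite {L\<in>\<A>. x \<in> L \<and> y \<in> L}" using fA by simp
    ultimately show ?thesis using that card_le_Suc0_iff_eq by blast
  qed
  have t1: "0 < t - 1" using assms(2) by simp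
  have key: "card (E \<inter> ln 0 x) = 2" if xE: "x\<in>E" for x
  proof -
    have xX: "x\<in>X" using that assms(6) by auto
    have lnA: "\<forall>i<t-1. ln i x \<in> \<A> \<and> x \<in> ln i x"
    proof (intro allI impI)
      fix i assume i: "i < t - 1"
      show "ln i x \<in> \<A> \<and> x \<in> ln i x"
        using inA[OF i conjunct1[OF ln[OF i xX]]] conjunct2[OF ln[OF i xX]] by simp
    qed
    define h where "h i = (SOME y. y \<in> E \<inter> ln i x \<and> y \<noteq> x)" for i
    have h: "h i \<in> E \<inter> ln i x \<and> h i \<noteq> x" if "i<t-1" for i
    proof -
      have A: "ln i x \<in> \<A>" using lnA that by simp
      have "x \<in> E \<inter> ln i x" using lnA that xE by simp
      hence c2: "2 \<le> card(E \<inter> ln i x)" using two[OF A] by blast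
      have "\<exists>y. y \<in> E \<inter> ln i x \<and> y \<noteq> x"
      proof (rule ccontr)
        assume "\<not> ?thesis"
        hence "E \<inter> ln i x \<subseteq> {x}" by blast
        hence "card (E \<inter> ln i x) \<le> card {x}" by (rule card_mono[rotated]) simp
        thus False using c2 by simp
      qed
      then show ?thesis unfolding h_def by (rule someI_ex)
    qed
    have dif: "ln i x \<noteq> ln j x" if "i<t-1" "j<t-1" "i\<noteq>j" for i j
    proof
      assume e: "ln i x = ln j x"
      have "P i \<inter> P j = {}" using Pd that by simp
      thus False using e conjunct1[OF ln[OF that(1) xX]] conjunct1[OF ln[OF that(2) xX]] by auto
    qed
    have hinj: "inj_on h {..<t-1}"
    proof (rule inj_onI)
      fix i j assume i: "i \<in> {..<t-1}" and j: "j \<in> {..<t-1}" and e: "h i = h j"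
      show "i = j"
      proof (rule ccontr)
        assume ne: "i \<noteq> j"
        have "ln i x = ln j x"
        proof -
          have a: "ln i x \<in> \<A> \<and> x \<in> ln i x" "ln j x \<in> \<A> \<and> x \<in> ln j x"
            using lnA i j by auto
          have b: "h i \<in> E \<inter> ln i x \<and> h i \<noteq> x" "h j \<in> E \<inter> ln j x"
            using h i j by auto
          have c: "h i \<in> X" using b assms(6) by blast
          show ?thesis by (rule dl[of _ _ x "h i"]) (use a b c e xX in auto)
        qed
        thus False using dif i j ne by auto
      qed
    qed
    have himg: "h ` {..<t-1} \<subseteq> E - {x}" using h by auto
    have c1: "card (h ` {..<t-1}) = t-1" using card_image[OF hinj] by simp
    have c2: "card (E-{x}) = t-1" using fE xE assms(7) by simp
    have himg_eq: "h ` {..<t-1} = E - {x}"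
      by (rule card_subset_eq) (use fE himg c1 c2 in auto)
    have sub: "E \<inter> ln 0 x \<subseteq> {x, h 0}"
    proof
      fix y assume y: "y \<in> E \<inter> ln 0 x"
      show "y \<in> {x, h 0}"
      proof (cases "y = x")
        case False
        then have "y \<in> h ` {..<t-1}" using himg_eq y by auto
        then obtain j where j: "j < t-1" "y = h j" by auto
        show ?thesis
        proof (cases "j = 0")
          case True thus ?thesis using j by simp
        next
          case False
          have "ln 0 x = ln j x"
          proof -
            have a: "ln 0 x \<in> \<A> \<and> x \<in> ln 0 x" "ln j x \<in> \<A> \<and> x \<in> ln j x"
              using lnA t1 j by auto
            have b: "h j \<in> E \<inter> ln j x" using h j by auto
            have c: "y \<in> X" using y assms(6) by blast
            show ?thesis by (rule dl[of _ _ x y]) (use a b c j y xX \<open>y \<noteq> x\<close> in auto)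
          qed
          thus ?thesis using dif t1 j False by auto
        qed
      qed simp
    qed
    have "card (E \<inter> ln 0 x) \<le> card {x, h 0}" using sub by (rule card_mono[rotated]) simp
    also have "\<dots> \<le> 2" by (simp add: card_insert_if)
    finally have le: "card (E \<inter> ln 0 x) \<le> 2" .
    have A0: "ln 0 x \<in> \<A>" using lnA t1 by simp
    have "x \<in> E \<inter> ln 0 x" using lnA t1 xE by simp
    hence "2 \<le> card (E \<inter> ln 0 x)" using two[OF A0] by blast
    with le show ?thesis by simp
  qed
  define Q where "Q = (\<lambda>L. E \<inter> L) ` {L \<in> P 0. E \<inter> L \<noteq> {}}"
  have UQ: "\<Union>Q = E"
  proof
    show "\<Union>Q \<subseteq> E" unfolding Q_def by auto
    show "E \<subseteq> \<Union>Q"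
    proof
      fix x assume x: "x \<in> E"
      hence xX: "x \<in> X" using assms(6) by auto
      have "E \<inter> ln 0 x \<in> Q" unfolding Q_def using ln[OF t1 xX] x by blast
      thus "x \<in> \<Union>Q" using ln[OF t1 xX] x by blast
    qed
  qed
  have fQ: "finite Q" unfolding Q_def
    by (rule finite_subset[of _ "Pow E"]) (use fE in auto)
  have P0: "\<forall>L\<in>P 0. \<forall>M\<in>P 0. L \<noteq> M \<longrightarrow> L \<inter> M = {}"
    using pc2[OF t1] .
  have pw: "pairwise disjnt Q"
  proof (rule pairwiseI)
    fix A B assume "A \<in> Q" "B \<in> Q" "A \<noteq> B"
    then obtain L M where "L \<in> P 0" "M \<in> P 0" "A = E \<inter> L" "B = E \<inter> M" "L \<noteq> M"
      unfolding Q_def by auto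
    thus "disjnt A B" using P0 unfolding disjnt_def by blast
  qed
  have cQ: "card A = 2" if AQ: "A \<in> Q" for A
  proof -
    from AQ obtain L where L: "L \<in> P 0" "E \<inter> L \<noteq> {}" "A = E \<inter> L" unfolding Q_def by blast
    then obtain x where x: "x \<in> E \<inter> L" by blast
    hence xX: "x \<in> X" using assms(6) by auto
    have "L = ln 0 x" using uniq[OF t1 L(1), of "ln 0 x" x] ln[OF t1 xX] x by blast
    thus ?thesis using key x L(3) by auto
  qed
  have "card E = sum card Q"
  proof -
    have "\<And>A. A \<in> Q \<Longrightarrow> finite A" using fE UQ by (meson Union_upper finite_subset)
    from card_Union_disjoint[OF pw this] UQ show ?thesis by simp
  qed
  also have "\<dots> = 2 * card Q" using cQ by simp
  finally have "even (card E)" by simp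
  thus False using assms(3) assms(7) by simp
qed

end
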